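(* The family $\mathfrak{F}^*=\{\tilde{\omega},\tilde{\omega^*}\}\cup\{\tilde{L}_n:n\geq 2\}$ is not $E_3$-learnable.
   Context: Partial orders are structures in the language $\{\leq\}$. $\omega$ and $\omega^*$ are the linear orders of the natural numbers and of the negative integers; $L_n$ is the finite linear order with $n$ elements. For a partial order $L$, $\tilde{L}$ is $L$ together with infinitely many new elements that are pairwise incomparable and incomparable to the elements of $L$ (presented with domain $\mathbb{N}$). All structures have domain $\mathbb{N}$ and are identified with their atomic diagrams (elements of $2^{\mathbb{N}}$). For a family $\mathfrak{K}$, $\mathrm{LD}(\mathfrak{K})\subseteq 2^{\mathbb{N}}$ is the set of structures with domain $\mathbb{N}$ isomorphic to a member of $\mathfrak{K}$ (subspace topology). For an equivalence relation $E$ on a space $X$, $\mathfrak{K}$ is $E$-learnable if there is a continuous $\Gamma:\mathrm{LD}(\mathfrak{K})\to X$ with $\mathcal{S}\cong\mathcal{S}'\iff\Gamma(\mathcal{S})E\Gamma(\mathcal{S}')$ for all $\mathcal{S},\mathcal{S}'\in\mathrm{LD}(\mathfrak{K})$. Fix a computable bijection $\langle\cdot,\cdot\rangle:\mathbb{N}^2\to\mathbb{N}$; for $p\in\mathbb{N}^{\mathbb{N}\times\mathbb{N}}$ let $p^{[m]}(n)=p(\langle m,n\rangle)$; $E_0$ on $\mathbb{N}^{\mathbb{N}}$: $p\,E_0\,q\iff\exists m\forall n\ge m\ p(n)=q(n)$; $E_3$ on $\mathbb{N}^{\mathbb{N}\times\mathbb{N}}$: $p\,E_3\,q\iff\forall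 m\ p^{[m]}E_0q^{[m]}$. *)

theory Defs
  imports "HOL-Analysis.Analysis"
begin

(* A {<=}-structure with domain nat is a binary relation on nat. *)
type_synonym struct = "nat \<Rightarrow> nat \<Rightarrow> bool"

(* Atomic diagram in 2^N, via the computable bijection prod_decode : nat -> nat x nat. *)
definition diag :: "struct \<Rightarrow> (nat \<Rightarrow> bool)" where
  "diag S = (\<lambda>k. S (fst (prod_decode k)) (snd (prod_decode k)))"

definition iso_to :: "struct \<Rightarrow> 'a set \<Rightarrow> ('a \<Rightarrow> 'a \<Rightarrow> bool) \<Rightarrow> bool" where
  "iso_to S A R \<longleftrightarrow> (\<exists>f. bij_betw f UNIV A \<and> (\<forall>x y. S x y \<longleftrightarrow> R (f x) (f y)))"

definition struct_iso :: "struct \<Rightarrow> struct \<Rightarrow> bool" where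
  "struct_iso S S' \<longleftrightarrow> iso_to S UNIV S'"

(* L~ : L plus infinitely many new pairwise incomparable elements, incomparable to L. *)
fun tilde_rel :: "('a \<Rightarrow> 'a \<Rightarrow> bool) \<Rightarrow> 'a + nat \<Rightarrow> 'a + nat \<Rightarrow> bool" where
  "tilde_rel R (Inl a) (Inl b) = R a b"
| "tilde_rel R (Inr n) (Inr m) = (n = m)"
| "tilde_rel R _ _ = False"

definition tilde_carrier :: "'a set \<Rightarrow> ('a + nat) set" where
  "tilde_carrier A = Inl ` A \<union> range Inr"

definition LD_Fstar :: "struct set" where
  "LD_Fstar =
     {S. iso_to S (tilde_carrier (UNIV :: nat set)) (tilde_rel (\<le>))}
   \<union> {S. iso_to S (tilde_carrier {x :: int. x < 0}) (tilde_rel (\<le>))}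
   \<union> {S. \<exists>n::nat. n \<ge> 2 \<and> iso_to S (tilde_carrier {..<n}) (tilde_rel (\<le>))}"

definition E0 :: "(nat \<Rightarrow> nat) \<Rightarrow> (nat \<Rightarrow> nat) \<Rightarrow> bool" where
  "E0 p q \<longleftrightarrow> (\<exists>m. \<forall>n\<ge>m. p n = q n)"

definition column :: "(nat \<Rightarrow> nat) \<Rightarrow> nat \<Rightarrow> (nat \<Rightarrow> nat)" where
  "column p m = (\<lambda>n. p (prod_encode (m, n)))"

definition E3 :: "(nat \<Rightarrow> nat) \<Rightarrow> (nat \<Rightarrow> nat) \<Rightarrow> bool" where
  "E3 p q \<longleftrightarrow> (\<forall>m. E0 (column p m) (column q m))"

(* E3-learnability of a family given by its LD set (of structures);
   the space LD is the image under diag, with the subspace topology of 2^N (product topology). *)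
definition E3_learnable :: "struct set \<Rightarrow> bool" where
  "E3_learnable LD \<longleftrightarrow>
     (\<exists>\<Gamma> :: (nat \<Rightarrow> bool) \<Rightarrow> (nat \<Rightarrow> nat).
        continuous_on (diag ` LD) \<Gamma> \<and>
        (\<forall>S\<in>LD. \<forall>S'\<in>LD. struct_iso S S' \<longleftrightarrow> E3 (\<Gamma> (diag S)) (\<Gamma> (diag S'))))"

end

theory Submission
  imports Defs "HOL-Library.Infinite_Set"
begin

definition Sb :: "bool \<Rightarrow> nat set \<Rightarrow> struct" where
  "Sb b C x y = (x = y \<or> (x \<in> C \<and> y \<in> C \<and> (if b then x \<le> y else y \<le> x)))"

lemma cont_local:
  fixes \<Gamma> :: "(nat \<Rightarrow> bool) \<Rightarrow> (nat \<Rightarrow> nat)"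
  assumes "continuous_on X \<Gamma>" "x \<in> X"
  shows "\<exists>N. \<forall>y\<in>X. (\<forall>k<N. y k = x k) \<longrightarrow> \<Gamma> y j = \<Gamma> x j"
proof -
  have c: "continuous_on X (\<lambda>y. \<Gamma> y j)"
    using assms(1) by (rule continuous_on_product_then_coordinatewise)
  have o: "open {\<Gamma> x j}" by (rule open_discrete)
  have "\<exists>A. open A \<and> A \<inter> X = (\<lambda>y. \<Gamma> y j) -` {\<Gamma> x j} \<inter> X"
    using continuous_on_open_invariant[THEN iffD1, OF c, rule_format, OF o] .
  then obtain U where U: "open U" "U \<inter> X = (\<lambda>y. \<Gamma> y j) -` {\<Gamma> x j} \<inter> X"
    by (elim exE conjE)
  have xU: "x \<in> U" using U(2) assms(2) by blast
  have oU: "openin (product_topology (\<lambda>i. euclidean) UNIV) U"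
    using U(1) unfolding open_fun_def .
  obtain V where V: "x \<in> (\<Pi>\<^sub>E i\<in>UNIV. V i)" "finite {i. V i \<noteq> topspace (euclidean::bool topology)}" "(\<Pi>\<^sub>E i\<in>UNIV. V i) \<subseteq> U"
    using product_topology_open_contains_basis[OF oU xU] by (elim exE conjE)
  have V2: "finite {i. V i \<noteq> UNIV}" using V(2) unfolding topspace_euclidean .
  obtain N where N: "{i. V i \<noteq> UNIV} \<subseteq> {..<N}"
    using finite_nat_bounded[OF V2] by (elim exE)
  show ?thesis
  proof (intro exI ballI impI)
    fix y assume yX: "y \<in> X" and ag: "\<forall>k<N. y k = x k"
    have "y i \<in> V i" for i
    proof (cases "i < N")
      case True
      have "x i \<in> V i" using V(1) by (simp add: PiE_iff)
      then show ?thesis using ag True by simp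
    next
      case False then have "V i = UNIV" using N by auto
      then show ?thesis by simp
    qed
    then have "y \<in> (\<Pi>\<^sub>E i\<in>UNIV. V i)" by (simp add: PiE_iff)
    then have "y \<in> U" by (rule subsetD[OF V(3)])
    then have "y \<in> U \<inter> X" using yX by (rule IntI)
    then have "y \<in> (\<lambda>y. \<Gamma> y j) -` {\<Gamma> x j} \<inter> X" unfolding U(2) .
    then show "\<Gamma> y j = \<Gamma> x j" by simp
  qed
qed

lemma diag_agree:
  assumes "\<forall>x<N. (x \<in> C) = (x \<in> D)"
  shows "\<forall>k<N. diag (Sb b C) k = diag (Sb b D) k"
proof (intro allI impI)
  fix k assume k: "k < N"
  obtain a c where ac: "prod_decode k = (a, c)" by (cases "prod_decode k")
  have "prod_encode (a, c) = k" using ac by (metis prod_decode_inverse)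
  then have "a \<le> k" "c \<le> k" using le_prod_encode_1 le_prod_encode_2 by metis+
  then show "diag (Sb b C) k = diag (Sb b D) k"
    using assms k ac by (auto simp: diag_def Sb_def)
qed

lemma iso_via:
  assumes "bij_betw g A UNIV" "\<forall>a\<in>A. \<forall>c\<in>A. S (g a) (g c) = R a c"
  shows "iso_to S A R"
  unfolding iso_to_def
proof (intro exI conjI allI)
  show "bij_betw (inv_into A g) UNIV A" using assms(1) by (rule bij_betw_inv_into)
  fix x y
  have r: "z \<in> g ` A" for z using assms(1) by (auto simp: bij_betw_def)
  have "inv_into A g x \<in> A" "inv_into A g y \<in> A" using r by (auto intro: inv_into_into)
  moreover have "g (inv_into A g x) = x" "g (inv_into A g y) = y" using r by (auto intro: f_inv_into_f)
  ultimately show "S x y = R (inv_into A g x) (inv_into A g y)" using assms(2) by metis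
qed

lemma bij_sum:
  fixes e1 :: "'a \<Rightarrow> nat"
  assumes "bij_betw e1 A C" "bij_betw e2 UNIV (-C)"
  shows "bij_betw (case_sum e1 e2) (tilde_carrier A) UNIV"
proof -
  have i1: "inj_on e1 A" "e1 ` A = C" and i2: "inj e2" "range e2 = -C"
    using assms by (auto simp: bij_betw_def)
  have inj: "inj_on (case_sum e1 e2) (tilde_carrier A)"
    unfolding inj_on_def tilde_carrier_def
  proof (intro ballI impI)
    fix a c assume a: "a \<in> Inl ` A \<union> range Inr" and c: "c \<in> Inl ` A \<union> range Inr"
      and eq: "case_sum e1 e2 a = case_sum e1 e2 c"
    show "a = c"
    proof (cases a; cases c)
      fix a' c' assume "a = Inl a'" "c = Inl c'"
      then show ?thesis using a c eq i1(1) by (auto simp: inj_on_def)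
    next
      fix a' c' assume h: "a = Inl a'" "c = Inr c'"
      then have "e1 a' \<in> C" "e2 c' \<notin> C" using a i1(2) i2(2) by auto
      then show ?thesis using eq h by auto
    next
      fix a' c' assume h: "a = Inr a'" "c = Inl c'"
      then have "e1 c' \<in> C" "e2 a' \<notin> C" using c i1(2) i2(2) by auto
      then show ?thesis using eq h by auto
    next
      fix a' c' assume "a = Inr a'" "c = Inr c'"
      then show ?thesis using eq i2(1) by (auto simp: inj_on_def)
    qed
  qed
  have sur: "case_sum e1 e2 ` tilde_carrier A = UNIV"
  proof safe
    fix x :: nat
    show "x \<in> case_sum e1 e2 ` tilde_carrier A"
    proof (cases "x \<in> C")
      case True
      then obtain a where "a \<in> A" "x = e1 a" using i1 by auto
      then show ?thesis unfolding tilde_carrier_def by (auto intro!: image_eqI[where x="Inl a"])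
    next
      case False
      then obtain j where "x = e2 j" using i2 by auto
      then show ?thesis unfolding tilde_carrier_def by (auto intro!: image_eqI[where x="Inr j"])
    qed
  qed simp
  show ?thesis using inj sur by (simp add: bij_betw_def)
qed

lemma iso_Sb:
  fixes e1 :: "'a::order \<Rightarrow> nat"
  assumes e1: "bij_betw e1 A C" and co: "infinite (-C)"
    and mono: "\<forall>i\<in>A. \<forall>i'\<in>A. (if b then e1 i \<le> e1 i' else e1 i' \<le> e1 i) = (i \<le> i')"
  shows "iso_to (Sb b C) (tilde_carrier A) (tilde_rel (\<le>))"
proof (rule iso_via)
  have e2: "bij_betw (enumerate (-C)) UNIV (-C)" using co by (rule bij_enumerate)
  show "bij_betw (case_sum e1 (enumerate (-C))) (tilde_carrier A) UNIV"
    using e1 e2 by (rule bij_sum)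
  have i1: "inj_on e1 A" "e1 ` A = C" using e1 by (auto simp: bij_betw_def)
  have i2: "inj (enumerate (-C))" "\<And>j. enumerate (-C) j \<notin> C"
    using co inj_enumerate enumerate_in_set by auto
  show "\<forall>a\<in>tilde_carrier A. \<forall>c\<in>tilde_carrier A.
      Sb b C (case_sum e1 (enumerate (-C)) a) (case_sum e1 (enumerate (-C)) c) = tilde_rel (\<le>) a c"
  proof (intro ballI)
    fix a c assume a: "a \<in> tilde_carrier A" and c: "c \<in> tilde_carrier A"
    show "Sb b C (case_sum e1 (enumerate (-C)) a) (case_sum e1 (enumerate (-C)) c) = tilde_rel (\<le>) a c"
    proof (cases a; cases c)
      fix a' c' assume h: "a = Inl a'" "c = Inl c'"
      then have "a' \<in> A" "c' \<in> A" using a c by (auto simp: tilde_carrier_def)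
      moreover have "e1 a' \<in> C" "e1 c' \<in> C" using i1 \<open>a' \<in> A\<close> \<open>c' \<in> A\<close> by auto
      ultimately have "Sb b C (e1 a') (e1 c') = (if b then e1 a' \<le> e1 c' else e1 c' \<le> e1 a')"
        by (auto simp: Sb_def)
      then show ?thesis using h mono \<open>a' \<in> A\<close> \<open>c' \<in> A\<close> by simp
    next
      fix a' c' assume h: "a = Inl a'" "c = Inr c'"
      then have "a' \<in> A" using a by (auto simp: tilde_carrier_def)
      then have "e1 a' \<in> C" using i1 by auto
      then show ?thesis using h i2(2)[of c'] by (auto simp: Sb_def)
    next
      fix a' c' assume h: "a = Inr a'" "c = Inl c'"
      then have "c' \<in> A" using c by (auto simp: tilde_carrier_def)
      then have "e1 c' \<in> C" using i1 by auto
      then show ?thesis using h i2(2)[of a'] by (auto simp: Sb_def)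
    next
      fix a' c' assume h: "a = Inr a'" "c = Inr c'"
      then show ?thesis using i2 by (auto simp: Sb_def inj_def)
    qed
  qed
qed

lemma fin_co: "finite (C::nat set) \<Longrightarrow> infinite (-C)"
proof
  assume "finite C" "finite (-C)"
  then have "finite (C \<union> -C)" by simp
  then show False by simp
qed

lemma fin_enum_le:
  "finite S \<Longrightarrow> m < card S \<Longrightarrow> n < card S \<Longrightarrow> (enumerate S m \<le> enumerate S n) = (m \<le> n)"
  for S :: "nat set"
proof -
  assume a: "finite S" "m < card S" "n < card S"
  then have "(enumerate S n < enumerate S m) = (n < m)" by simp
  then show ?thesis by linarith
qed

lemma iso_fin:
  assumes "finite C"
  shows "iso_to (Sb b C) (tilde_carrier {..<card C}) (tilde_rel (\<le>))"
proof (cases b)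
  case True
  have bj: "bij_betw (enumerate C) {..<card C} C" using assms by (rule finite_bij_enumerate)
  have mono: "\<forall>i\<in>{..<card C}. \<forall>i'\<in>{..<card C}. (if b then enumerate C i \<le> enumerate C i' else enumerate C i' \<le> enumerate C i) = (i \<le> i')"
  proof (intro ballI)
    fix i i' assume "i \<in> {..<card C}" "i' \<in> {..<card C}"
    then show "(if b then enumerate C i \<le> enumerate C i' else enumerate C i' \<le> enumerate C i) = (i \<le> i')"
      using True assms by (simp add: fin_enum_le)
  qed
  show ?thesis by (rule iso_Sb[OF bj fin_co[OF assms] mono])
next
  case False
  define n where "n = card C"
  have bj0: "bij_betw (\<lambda>i. n - 1 - i) {..<n} {..<n}"
    by (rule bij_betw_byWitness[where f'="\<lambda>i. n - 1 - i"]) auto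
  have bj: "bij_betw (enumerate C \<circ> (\<lambda>i. n - 1 - i)) {..<n} C"
    using bj0 finite_bij_enumerate[OF assms] unfolding n_def by (rule bij_betw_trans)
  have mono: "\<forall>i\<in>{..<n}. \<forall>i'\<in>{..<n}. (if b then (enumerate C \<circ> (\<lambda>i. n - 1 - i)) i \<le> (enumerate C \<circ> (\<lambda>i. n - 1 - i)) i' else (enumerate C \<circ> (\<lambda>i. n - 1 - i)) i' \<le> (enumerate C \<circ> (\<lambda>i. n - 1 - i)) i) = (i \<le> i')"
  proof (intro ballI)
    fix i i' assume "i \<in> {..<n}" "i' \<in> {..<n}"
    then show "(if b then (enumerate C \<circ> (\<lambda>i. n - 1 - i)) i \<le> (enumerate C \<circ> (\<lambda>i. n - 1 - i)) i' else (enumerate C \<circ> (\<lambda>i. n - 1 - i)) i' \<le> (enumerate C \<circ> (\<lambda>i. n - 1 - i)) i) = (i \<le> i')"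
      using False assms unfolding n_def by (simp add: fin_enum_le, arith)
  qed
  have "iso_to (Sb b C) (tilde_carrier {..<n}) (tilde_rel (\<le>))"
    by (rule iso_Sb[OF bj fin_co[OF assms] mono])
  then show ?thesis unfolding n_def .
qed

lemma iso_infT:
  assumes "infinite C" "infinite (-C)"
  shows "iso_to (Sb True C) (tilde_carrier (UNIV::nat set)) (tilde_rel (\<le>))"
proof -
  have mono: "\<forall>i\<in>(UNIV::nat set). \<forall>i'\<in>UNIV. (if True then enumerate C i \<le> enumerate C i' else enumerate C i' \<le> enumerate C i) = (i \<le> i')"
    using assms(1) by simp
  show ?thesis by (rule iso_Sb[OF bij_enumerate[OF assms(1)] assms(2) mono])
qed

lemma iso_infF:
  assumes "infinite C" "infinite (-C)"
  shows "iso_to (Sb False C) (tilde_carrier {x::int. x < 0}) (tilde_rel (\<le>))"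
proof -
  have bj0: "bij_betw (\<lambda>i::int. nat (-i-1)) {x::int. x < 0} UNIV"
    by (rule bij_betw_byWitness[where f'="\<lambda>x. - int x - 1"]) auto
  have bj: "bij_betw (enumerate C \<circ> (\<lambda>i::int. nat (-i-1))) {x::int. x < 0} C"
    using bj0 bij_enumerate[OF assms(1)] by (rule bij_betw_trans)
  have mono: "\<forall>i\<in>{x::int. x < 0}. \<forall>i'\<in>{x::int. x < 0}. (if False then (enumerate C \<circ> (\<lambda>i::int. nat (-i-1))) i \<le> (enumerate C \<circ> (\<lambda>i::int. nat (-i-1))) i' else (enumerate C \<circ> (\<lambda>i::int. nat (-i-1))) i' \<le> (enumerate C \<circ> (\<lambda>i::int. nat (-i-1))) i) = (i \<le> i')"
  proof (intro ballI)
    fix i i' :: int assume "i \<in> {x. x < 0}" "i' \<in> {x. x < 0}"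
    then show "(if False then (enumerate C \<circ> (\<lambda>i::int. nat (-i-1))) i \<le> (enumerate C \<circ> (\<lambda>i::int. nat (-i-1))) i' else (enumerate C \<circ> (\<lambda>i::int. nat (-i-1))) i' \<le> (enumerate C \<circ> (\<lambda>i::int. nat (-i-1))) i) = (i \<le> i')"
      using assms(1) by auto
  qed
  show ?thesis by (rule iso_Sb[OF bj assms(2) mono])
qed

lemma LD_fin: "finite C \<Longrightarrow> 2 \<le> card C \<Longrightarrow> Sb b C \<in> LD_Fstar"
proof -
  assume a: "finite C" "2 \<le> card C"
  have "iso_to (Sb b C) (tilde_carrier {..<card C}) (tilde_rel (\<le>))" using a(1) by (rule iso_fin)
  then have "Sb b C \<in> {S. \<exists>n::nat. n \<ge> 2 \<and> iso_to S (tilde_carrier {..<n}) (tilde_rel (\<le>))}"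
    using a(2) by (intro CollectI exI[of _ "card C"] conjI)
  then show ?thesis unfolding LD_Fstar_def by (rule UnI2)
qed

lemma LD_inf: "infinite C \<Longrightarrow> infinite (-C) \<Longrightarrow> Sb b C \<in> LD_Fstar"
proof (cases b)
  case True
  assume a: "infinite C" "infinite (-C)"
  have "iso_to (Sb True C) (tilde_carrier (UNIV::nat set)) (tilde_rel (\<le>))" using a by (rule iso_infT)
  then show ?thesis unfolding LD_Fstar_def using True by simp
next
  case False
  assume a: "infinite C" "infinite (-C)"
  have "iso_to (Sb False C) (tilde_carrier {x::int. x < 0}) (tilde_rel (\<le>))" using a by (rule iso_infF)
  then show ?thesis unfolding LD_Fstar_def using False by simp
qed

lemma iso_struct:
  assumes "iso_to S A R" "iso_to S' A R"
  shows "struct_iso S S'"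
proof -
  obtain f1 where f1: "bij_betw f1 UNIV A" "\<forall>x y. S x y = R (f1 x) (f1 y)"
    using assms(1) unfolding iso_to_def by blast
  obtain f2 where f2: "bij_betw f2 UNIV A" "\<forall>x y. S' x y = R (f2 x) (f2 y)"
    using assms(2) unfolding iso_to_def by blast
  define h where "h = inv_into UNIV f2 \<circ> f1"
  have "bij_betw h UNIV UNIV"
    unfolding h_def using f1(1) bij_betw_inv_into[OF f2(1)] by (rule bij_betw_trans)
  moreover have "f2 (h x) = f1 x" for x
  proof -
    have "f1 x \<in> range f2" using f1(1) f2(1) by (auto simp: bij_betw_def)
    then show ?thesis unfolding h_def by (simp add: f_inv_into_f)
  qed
  moreover have "\<forall>x y. S x y = S' (h x) (h y)" using f1(2) f2(2) calculation(2) by simp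
  ultimately show ?thesis unfolding struct_iso_def iso_to_def by blast
qed

lemma not_iso_TF:
  assumes inf: "infinite C"
  shows "\<not> struct_iso (Sb True C) (Sb False C)"
proof
  assume "struct_iso (Sb True C) (Sb False C)"
  then obtain f where bf: "bij f" and H: "\<forall>x y. Sb True C x y = Sb False C (f x) (f y)"
    unfolding struct_iso_def iso_to_def by blast
  have unb: "\<exists>c\<in>C. c > k" for k using inf infinite_nat_iff_unbounded by blast
  define c0 where "c0 = (LEAST x. x \<in> C)"
  obtain c where "c \<in> C" using unb[of 0] by blast
  then have c0: "c0 \<in> C" unfolding c0_def by (rule LeastI)
  have c0le: "\<And>y. y \<in> C \<Longrightarrow> c0 \<le> y" unfolding c0_def by (rule Least_le)
  obtain c1 where c1: "c1 \<in> C" "c1 > c0" using unb by blast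
  have "Sb True C c0 c1" using c0 c1 by (simp add: Sb_def)
  then have "Sb False C (f c0) (f c1)" using H by blast
  moreover have "f c0 \<noteq> f c1"
  proof
    assume "f c0 = f c1"
    then have "c0 = c1" using bf by (simp add: bij_def inj_eq)
    then show False using c1(2) by simp
  qed
  ultimately have fc0: "f c0 \<in> C" by (auto simp: Sb_def)
  obtain z where z: "z \<in> C" "z > f c0" using unb by blast
  have "z \<in> range f" using bf by (simp add: bij_def)
  then obtain y where y: "f y = z" by blast
  have "Sb False C (f y) (f c0)" using y z fc0 by (simp add: Sb_def)
  then have "Sb True C y c0" using H by blast
  moreover have "y \<noteq> c0" using y z by auto
  ultimately have "y \<in> C" by (auto simp: Sb_def)
  then have "Sb True C c0 y" using c0 c0le by (simp add: Sb_def)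
  then have "Sb False C (f c0) (f y)" using H by blast
  then show False using y z by (auto simp: Sb_def)
qed

lemma E0_refl: "E0 p p" unfolding E0_def by blast

lemma E0_sym: "E0 p q \<Longrightarrow> E0 q p" unfolding E0_def by (auto simp: eq_commute)

lemma E0_trans: "E0 p q \<Longrightarrow> E0 q s \<Longrightarrow> E0 p s"
proof -
  assume "E0 p q" "E0 q s"
  then obtain a c where a: "\<forall>n\<ge>a. p n = q n" and c: "\<forall>n\<ge>c. q n = s n" unfolding E0_def by blast
  have "\<forall>n\<ge>max a c. p n = s n" using a c by simp
  then show ?thesis unfolding E0_def by blast
qed

lemma step:
  fixes \<Gamma> :: "(nat \<Rightarrow> bool) \<Rightarrow> (nat \<Rightarrow> nat)"
  assumes cont: "continuous_on (diag ` LD_Fstar) \<Gamma>"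
    and red: "\<forall>S\<in>LD_Fstar. \<forall>S'\<in>LD_Fstar. struct_iso S S' \<longleftrightarrow> E3 (\<Gamma> (diag S)) (\<Gamma> (diag S'))"
    and bad: "\<forall>n0. \<exists>n\<ge>n0. \<not> E0 (column (\<Gamma> (diag (Sb b {..<n}))) m) r"
    and D: "finite D" "D \<subseteq> {..<M}"
  shows "\<exists>D' M' j. finite D' \<and> D' \<subseteq> {..<M'} \<and> M < M' \<and> D' \<inter> {..<M} = D \<and> card D < card D'
     \<and> M' - 1 \<notin> D' \<and> J \<le> j \<and>
     (\<forall>C. C \<inter> {..<M'} = D' \<longrightarrow> infinite C \<longrightarrow> infinite (-C) \<longrightarrow> column (\<Gamma> (diag (Sb b C))) m j \<noteq> r j)"
proof -
  obtain n where n: "n \<ge> max 2 (card D + 1)" "\<not> E0 (column (\<Gamma> (diag (Sb b {..<n}))) m) r"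
    using bad by blast
  define T where "T = D \<union> {M..<M + (n - card D)}"
  have disj: "D \<inter> {M..<M + (n - card D)} = {}" using D(2) by auto
  have fT: "finite T" using D(1) unfolding T_def by simp
  have cT: "card T = n" unfolding T_def using card_Un_disjoint[OF D(1) _ disj] n(1) by simp
  have LT: "Sb b T \<in> LD_Fstar" using LD_fin[OF fT] cT n(1) by simp
  have Ln: "Sb b {..<n} \<in> LD_Fstar" using LD_fin[of "{..<n}"] n(1) by simp
  have i1: "iso_to (Sb b T) (tilde_carrier {..<n}) (tilde_rel (\<le>))" using iso_fin[OF fT] cT by simp
  have i2: "iso_to (Sb b {..<n}) (tilde_carrier {..<n}) (tilde_rel (\<le>))" using iso_fin[of "{..<n}"] by simp
  have "struct_iso (Sb b T) (Sb b {..<n})" by (rule iso_struct[OF i1 i2])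
  then have "E3 (\<Gamma> (diag (Sb b T))) (\<Gamma> (diag (Sb b {..<n})))" using red[rule_format, OF LT Ln] by simp
  then have "E0 (column (\<Gamma> (diag (Sb b T))) m) (column (\<Gamma> (diag (Sb b {..<n}))) m)"
    unfolding E3_def by blast
  then have "\<not> E0 (column (\<Gamma> (diag (Sb b T))) m) r" using n(2) E0_trans E0_sym by blast
  then obtain j where j: "j \<ge> J" "column (\<Gamma> (diag (Sb b T))) m j \<noteq> r j"
    unfolding E0_def by blast
  obtain N where N: "\<forall>y\<in>diag ` LD_Fstar. (\<forall>k<N. y k = diag (Sb b T) k) \<longrightarrow>
      \<Gamma> y (prod_encode (m, j)) = \<Gamma> (diag (Sb b T)) (prod_encode (m, j))"
    using cont_local[OF cont, of "diag (Sb b T)" "prod_encode (m, j)"] LT by blast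
  define M' where "M' = max N (M + (n - card D)) + 1"
  show ?thesis
  proof (intro exI conjI allI impI)
    show "finite T" by fact
    show "T \<subseteq> {..<M'}" using D(2) unfolding T_def M'_def by auto
    show "M < M'" using n(1) unfolding M'_def by auto
    show "T \<inter> {..<M} = D" using D(2) unfolding T_def by auto
    show "card D < card T" using cT n(1) by simp
    show "M' - 1 \<notin> T" using D(2) unfolding T_def M'_def by auto
    show "J \<le> j" by fact
    fix C assume C: "C \<inter> {..<M'} = T" "infinite C" "infinite (-C)"
    have LC: "Sb b C \<in> LD_Fstar" using LD_inf C by blast
    have "\<forall>x<N. (x \<in> C) = (x \<in> T)"
    proof (intro allI impI)
      fix x assume "x < N"
      then have "x < M'" unfolding M'_def by auto
      then show "(x \<in> C) = (x \<in> T)" using C(1) by blast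
    qed
    then have "\<forall>k<N. diag (Sb b C) k = diag (Sb b T) k" by (rule diag_agree)
    then have "\<Gamma> (diag (Sb b C)) (prod_encode (m, j)) = \<Gamma> (diag (Sb b T)) (prod_encode (m, j))"
      using N LC by blast
    then show "column (\<Gamma> (diag (Sb b C))) m j \<noteq> r j" using j(2) unfolding column_def by simp
  qed
qed

lemma key:
  fixes \<Gamma> :: "(nat \<Rightarrow> bool) \<Rightarrow> (nat \<Rightarrow> nat)"
  assumes cont: "continuous_on (diag ` LD_Fstar) \<Gamma>"
    and red: "\<forall>S\<in>LD_Fstar. \<forall>S'\<in>LD_Fstar. struct_iso S S' \<longleftrightarrow> E3 (\<Gamma> (diag S)) (\<Gamma> (diag S'))"
    and E: "infinite E" "infinite (-E)"
    and bad: "\<forall>n0. \<exists>n\<ge>n0. \<not> E0 (column (\<Gamma> (diag (Sb b {..<n}))) m) (column (\<Gamma> (diag (Sb b E))) m)"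
  shows False
proof -
  define r where "r = column (\<Gamma> (diag (Sb b E))) m"
  define P where "P = (\<lambda>D M J (D'::nat set) M' j. finite D' \<and> D' \<subseteq> {..<M'} \<and> M < M' \<and> D' \<inter> {..<M} = D \<and> card D < card D'
     \<and> M' - 1 \<notin> D' \<and> J \<le> j \<and>
     (\<forall>C. C \<inter> {..<M'} = D' \<longrightarrow> infinite C \<longrightarrow> infinite (-C) \<longrightarrow> column (\<Gamma> (diag (Sb b C))) m j \<noteq> r j))"
  have bad': "\<forall>n0. \<exists>n\<ge>n0. \<not> E0 (column (\<Gamma> (diag (Sb b {..<n}))) m) r"
    using bad unfolding r_def .
  have st: "\<exists>D' M' j. P D M J D' M' j" if "finite D" "D \<subseteq> {..<M}" for D M J
    unfolding P_def by (rule step[OF cont red bad' that])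
  define Q where "Q = (\<lambda>(x::nat set \<times> nat \<times> nat) J (y::nat set \<times> nat \<times> nat). P (fst x) (fst (snd x)) J (fst y) (fst (snd y)) (snd (snd y)))"
  have exQ: "\<exists>y. Q x J y" if hx: "finite (fst x)" "fst x \<subseteq> {..<fst (snd x)}" for x J
  proof -
    obtain D' M' j' where "P (fst x) (fst (snd x)) J D' M' j'" using st[OF hx] by blast
    then have "Q x J (D', M', j')" unfolding Q_def by simp
    then show ?thesis by blast
  qed
  define nxt where "nxt = (\<lambda>x J. SOME y. Q x J y)"
  have nxtQ: "Q x J (nxt x J)" if "finite (fst x)" "fst x \<subseteq> {..<fst (snd x)}" for x J
    unfolding nxt_def using exQ[OF that] by (rule someI_ex)
  define sq where "sq = rec_nat ({}, 0, 0) (\<lambda>k x. nxt x k)"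
  have sq0: "sq 0 = ({}, 0, 0)" unfolding sq_def by simp
  have sqS: "sq (Suc k) = nxt (sq k) k" for k unfolding sq_def by simp
  define D where "D k = fst (sq k)" for k
  define M where "M k = fst (snd (sq k))" for k
  define j where "j k = snd (snd (sq (Suc k)))" for k
  have inv: "finite (D k) \<and> D k \<subseteq> {..<M k}" for k
  proof (induction k)
    case 0 then show ?case by (simp add: D_def M_def sq0)
  next
    case (Suc k)
    then have "Q (sq k) k (sq (Suc k))" unfolding sqS D_def M_def by (intro nxtQ) auto
    then have "P (D k) (M k) k (D (Suc k)) (M (Suc k)) (j k)" unfolding Q_def D_def M_def j_def by simp
    then show ?case unfolding P_def by blast
  qed
  have PP: "P (D k) (M k) k (D (Suc k)) (M (Suc k)) (j k)" for k
  proof -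
    have "Q (sq k) k (sq (Suc k))" unfolding sqS using inv[of k] unfolding D_def M_def by (intro nxtQ) auto
    then show ?thesis unfolding Q_def D_def M_def j_def by simp
  qed
  have PM: "M k < M (Suc k)" and PD: "D (Suc k) \<inter> {..<M k} = D k"
    and PC: "card (D k) < card (D (Suc k))" and PN: "M (Suc k) - 1 \<notin> D (Suc k)"
    and Pj: "k \<le> j k"
    and PF: "\<And>C. C \<inter> {..<M (Suc k)} = D (Suc k) \<Longrightarrow> infinite C \<Longrightarrow> infinite (-C) \<Longrightarrow> column (\<Gamma> (diag (Sb b C))) m (j k) \<noteq> r (j k)"
    for k using PP[of k] unfolding P_def by blast+
  have Mmono: "M k \<le> M (k + l)" for k l
  proof (induction l)
    case (Suc l) then show ?case using PM[of "k + l"] by simp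
  qed simp
  have Mge: "k \<le> M k" for k
  proof (induction k)
    case (Suc k) then show ?case using PM[of k] by simp
  qed simp
  have cardD: "k \<le> card (D k)" for k
  proof (induction k)
    case (Suc k) then show ?case using PC[of k] by simp
  qed simp
  have Dstab: "D (k + l) \<inter> {..<M k} = D k" for k l
  proof (induction l)
    case 0 then show ?case using inv by auto
  next
    case (Suc l)
    have "D (Suc (k + l)) \<inter> {..<M (k + l)} = D (k + l)" by (rule PD)
    have sub: "{..<M k} \<subseteq> {..<M (k + l)}" using Mmono[of k l] by (simp add: subset_eq)
    have "D (Suc (k + l)) \<inter> {..<M k} = (D (Suc (k + l)) \<inter> {..<M (k + l)}) \<inter> {..<M k}"
      using Int_absorb1[OF sub] by (simp add: Int_assoc)
    also have "\<dots> = D (k + l) \<inter> {..<M k}" using \<open>D (Suc (k + l)) \<inter> {..<M (k + l)} = D (k + l)\<close> by simp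
    also have "\<dots> = D k" by (rule Suc.IH)
    finally show ?case by simp
  qed
  define C where "C = (\<Union>k. D k)"
  have Cseg: "C \<inter> {..<M k} = D k" for k
  proof
    show "D k \<subseteq> C \<inter> {..<M k}" using inv unfolding C_def by blast
    show "C \<inter> {..<M k} \<subseteq> D k"
    proof
      fix x assume "x \<in> C \<inter> {..<M k}"
      then obtain l where x: "x \<in> D l" "x < M k" unfolding C_def by blast
      have "D (l + k) \<inter> {..<M l} = D l" by (rule Dstab)
      then have "x \<in> D (k + l)" using x(1) by (auto simp: add.commute)
      then show "x \<in> D k" using Dstab[of k l] x(2) by blast
    qed
  qed
  have Cinf: "infinite C"
  proof
    assume "finite C"
    have "D (Suc (card C)) \<subseteq> C" unfolding C_def by blast
    then have "card (D (Suc (card C))) \<le> card C" using \<open>finite C\<close> card_mono by blast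
    then show False using cardD[of "Suc (card C)"] by simp
  qed
  have Cco: "infinite (-C)"
    unfolding infinite_nat_iff_unbounded_le
  proof
    fix k
    have "M (Suc k) - 1 \<notin> D (Suc k)" "M k < M (Suc k)" using PN PM by blast+
    moreover have "M (Suc k) - 1 < M (Suc k)" using \<open>M k < M (Suc k)\<close> by simp
    ultimately have "M (Suc k) - 1 \<notin> C" using Cseg[of "Suc k"] by blast
    moreover have "k \<le> M (Suc k) - 1" using Mge[of k] \<open>M k < M (Suc k)\<close> by simp
    ultimately show "\<exists>x\<ge>k. x \<in> -C" by blast
  qed
  have diff: "k \<le> j k \<and> column (\<Gamma> (diag (Sb b C))) m (j k) \<noteq> r (j k)" for k
    using Pj[of k] PF[OF Cseg[of "Suc k"] Cinf Cco] by blast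
  have "\<not> E0 (column (\<Gamma> (diag (Sb b C))) m) r"
  proof
    assume "E0 (column (\<Gamma> (diag (Sb b C))) m) r"
    then obtain k0 where "\<forall>n\<ge>k0. column (\<Gamma> (diag (Sb b C))) m n = r n" unfolding E0_def by blast
    then show False using diff[of k0] by blast
  qed
  moreover have "struct_iso (Sb b C) (Sb b E)"
  proof (cases b)
    case True then show ?thesis using iso_struct[OF iso_infT[OF Cinf Cco] iso_infT[OF E]] by simp
  next
    case False then show ?thesis using iso_struct[OF iso_infF[OF Cinf Cco] iso_infF[OF E]] by simp
  qed
  then have "E3 (\<Gamma> (diag (Sb b C))) (\<Gamma> (diag (Sb b E)))"
    using red[rule_format, OF LD_inf[OF Cinf Cco] LD_inf[OF E]] by simp
  then have "E0 (column (\<Gamma> (diag (Sb b C))) m) r" unfolding E3_def r_def by blast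
  ultimately show False by blast
qed

theorem mainTheorem18:
  shows "\<not> E3_learnable LD_Fstar"
proof
  assume "E3_learnable LD_Fstar"
  then obtain \<Gamma> :: "(nat \<Rightarrow> bool) \<Rightarrow> (nat \<Rightarrow> nat)" where
    cont: "continuous_on (diag ` LD_Fstar) \<Gamma>" and
    red: "\<forall>S\<in>LD_Fstar. \<forall>S'\<in>LD_Fstar. struct_iso S S' \<longleftrightarrow> E3 (\<Gamma> (diag S)) (\<Gamma> (diag S'))"
    unfolding E3_learnable_def by blast
  define Ev where "Ev = {x::nat. even x}"
  have Evi: "infinite Ev" unfolding infinite_nat_iff_unbounded_le
  proof
    fix m :: nat show "\<exists>n\<ge>m. n \<in> Ev" by (intro exI[of _ "2 * m"]) (simp add: Ev_def)
  qed
  have Evc: "infinite (-Ev)" unfolding infinite_nat_iff_unbounded_le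
  proof
    fix m :: nat show "\<exists>n\<ge>m. n \<in> -Ev" by (intro exI[of _ "2 * m + 1"]) (simp add: Ev_def)
  qed
  have LT: "Sb True Ev \<in> LD_Fstar" and LF: "Sb False Ev \<in> LD_Fstar" using LD_inf[OF Evi Evc] by blast+
  have "\<not> E3 (\<Gamma> (diag (Sb True Ev))) (\<Gamma> (diag (Sb False Ev)))"
    using red[rule_format, OF LT LF] not_iso_TF[OF Evi] by simp
  then obtain m where m: "\<not> E0 (column (\<Gamma> (diag (Sb True Ev))) m) (column (\<Gamma> (diag (Sb False Ev))) m)"
    unfolding E3_def by blast
  have ev: "\<exists>n0. \<forall>n\<ge>n0. E0 (column (\<Gamma> (diag (Sb b {..<n}))) m) (column (\<Gamma> (diag (Sb b Ev))) m)" for b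
  proof (rule ccontr)
    assume "\<not> (\<exists>n0. \<forall>n\<ge>n0. E0 (column (\<Gamma> (diag (Sb b {..<n}))) m) (column (\<Gamma> (diag (Sb b Ev))) m))"
    then have "\<forall>n0. \<exists>n\<ge>n0. \<not> E0 (column (\<Gamma> (diag (Sb b {..<n}))) m) (column (\<Gamma> (diag (Sb b Ev))) m)"
      by blast
    then show False by (rule key[OF cont red Evi Evc])
  qed
  obtain n1 where n1: "\<forall>n\<ge>n1. E0 (column (\<Gamma> (diag (Sb True {..<n}))) m) (column (\<Gamma> (diag (Sb True Ev))) m)"
    using ev by blast
  obtain n2 where n2: "\<forall>n\<ge>n2. E0 (column (\<Gamma> (diag (Sb False {..<n}))) m) (column (\<Gamma> (diag (Sb False Ev))) m)"
    using ev by blast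
  define n where "n = max (max n1 n2) 2"
  have "n \<ge> n1" "n \<ge> n2" "n \<ge> 2" unfolding n_def by auto
  then have e1: "E0 (column (\<Gamma> (diag (Sb True {..<n}))) m) (column (\<Gamma> (diag (Sb True Ev))) m)"
    and e2: "E0 (column (\<Gamma> (diag (Sb False {..<n}))) m) (column (\<Gamma> (diag (Sb False Ev))) m)"
    using n1 n2 by blast+
  have i1: "iso_to (Sb True {..<n}) (tilde_carrier {..<n}) (tilde_rel (\<le>))" using iso_fin[of "{..<n}" True] by simp
  have i2: "iso_to (Sb False {..<n}) (tilde_carrier {..<n}) (tilde_rel (\<le>))" using iso_fin[of "{..<n}" False] by simp
  have LnT: "Sb True {..<n} \<in> LD_Fstar" using LD_fin[of "{..<n}" True] \<open>n \<ge> 2\<close> by simp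
  have LnF: "Sb False {..<n} \<in> LD_Fstar" using LD_fin[of "{..<n}" False] \<open>n \<ge> 2\<close> by simp
  have "E3 (\<Gamma> (diag (Sb True {..<n}))) (\<Gamma> (diag (Sb False {..<n})))"
    using red[rule_format, OF LnT LnF] iso_struct[OF i1 i2] by simp
  then have e3: "E0 (column (\<Gamma> (diag (Sb True {..<n}))) m) (column (\<Gamma> (diag (Sb False {..<n}))) m)"
    unfolding E3_def by blast
  have "E0 (column (\<Gamma> (diag (Sb True Ev))) m) (column (\<Gamma> (diag (Sb False Ev))) m)"
    using E0_trans[OF E0_trans[OF E0_sym[OF e1] e3] e2] .
  then show False using m by contradiction
qed

end
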